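(* Let $n=6$ and let $v_1,\dots,v_m$ be linearly independent vectors of the set $\{e_i+e_j+e_k\mid 1\le i<j<k\le 6\}$. Then $$\mathbb Z(v_1,\dots,v_m)=\mathbb Q(v_1,\dots,v_m)\cap \mathbb Z_{\equiv 0(3)}(e_1,\dots,e_6),$$ where $\mathbb Q(v_1,\dots,v_m)$ is the rational linear span of $v_1,\dots,v_m$ and $\mathbb Z_{\equiv 0(3)}(e_1,\dots,e_6)=\{\sum x_ie_i\mid x_i\in\mathbb Z,\ \sum x_i\equiv 0\pmod 3\}$.
   Context: Notation: $\varepsilon_1,\dots,\varepsilon_n$ is the standard basis of $\mathbb Q^n$ and $e_i=\varepsilon_i-\frac1n(1,\dots,1)$, so the $e_i$ satisfy the single linear relation $e_1+\dots+e_n=0$. $\mathbb Z(v_1,\dots,v_m)$ denotes the set of integer linear combinations of the $v_i$. *)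

theory Defs
  imports Complex_Main
begin

text \<open>Vectors of Q^6 are represented as functions nat => rat, coordinates 1..6,
  value 0 outside {1..6}.\<close>

definition eps :: "nat \<Rightarrow> nat \<Rightarrow> rat" where
  "eps i = (\<lambda>k. if 1 \<le> k \<and> k \<le> 6 then (if k = i then 1 else 0) - 1/6 else 0)"

definition triples :: "(nat \<Rightarrow> rat) set" where
  "triples = {(\<lambda>x. eps i x + eps j x + eps k x) | i j k.
                 1 \<le> i \<and> i < j \<and> j < k \<and> k \<le> 6}"

definition lincomb :: "(nat \<Rightarrow> rat) \<Rightarrow> (nat \<Rightarrow> nat \<Rightarrow> rat) \<Rightarrow> nat \<Rightarrow> nat \<Rightarrow> rat" where
  "lincomb c v m = (\<lambda>x. \<Sum>j<m. c j * v j x)"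

definition lin_indep :: "(nat \<Rightarrow> nat \<Rightarrow> rat) \<Rightarrow> nat \<Rightarrow> bool" where
  "lin_indep v m \<longleftrightarrow> (\<forall>c. lincomb c v m = (\<lambda>x. 0) \<longrightarrow> (\<forall>j<m. c j = 0))"

definition int_span :: "(nat \<Rightarrow> nat \<Rightarrow> rat) \<Rightarrow> nat \<Rightarrow> (nat \<Rightarrow> rat) set" where
  "int_span v m = {lincomb (\<lambda>j. of_int (c j)) v m | c :: nat \<Rightarrow> int. True}"

definition rat_span :: "(nat \<Rightarrow> nat \<Rightarrow> rat) \<Rightarrow> nat \<Rightarrow> (nat \<Rightarrow> rat) set" where
  "rat_span v m = {lincomb c v m | c. True}"

definition Z3 :: "(nat \<Rightarrow> rat) set" where
  "Z3 = {(\<lambda>x. \<Sum>i\<in>{1..6}. of_int (a i) * eps i x) | a :: nat \<Rightarrow> int.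
            (\<Sum>i\<in>{1..6}. a i) mod 3 = 0}"

end

theory Submission
  imports Defs
begin


definition Edges10 :: "nat set set" where
  "Edges10 = {{1,2},{1,3},{1,4},{1,5},{2,3},{2,4},{2,5},{3,4},{3,5},{4,5}}"

locale cs =
  fixes J :: "nat set" and E :: "nat \<Rightarrow> nat set" and c :: "nat \<Rightarrow> rat"
  assumes fin: "finite J"
  and edge: "\<And>j. j\<in>J \<Longrightarrow> E j \<in> Edges10"
  and ind: "\<And>d::nat\<Rightarrow>rat. (\<forall>a\<in>{1..5}. (\<Sum>j\<in>J. if a \<in> E j then d j else 0) = 0) \<Longrightarrow> \<forall>j\<in>J. d j = 0"
  and yint: "\<And>a. a\<in>{1..5} \<Longrightarrow> (\<Sum>j\<in>J. if a \<in> E j then c j else 0) \<in> \<int>"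
  and sint: "(\<Sum>j\<in>J. c j) \<in> \<int>"
begin

definition "J' = {j\<in>J. c j \<notin> \<int>}"
definition "P u w \<longleftrightarrow> (\<exists>j\<in>J'. E j = {u,w})"

lemma P_sym: "P u w = P w u"
  unfolding P_def by (simp add: insert_commute)

lemma J'sub: "J' \<subseteq> J" unfolding J'_def by auto
lemma finJ': "finite J'" using fin J'sub finite_subset by blast

lemma nodep:
  fixes d :: "nat \<Rightarrow> rat"
  assumes "S \<subseteq> J" "\<forall>a\<in>{1..5}. (\<Sum>j\<in>S. if a\<in>E j then d j else 0) = 0" "j\<in>S" "d j \<noteq> 0"
  shows False
proof -
  define d' where "d' = (\<lambda>i. if i\<in>S then d i else 0)"
  have "\<forall>a\<in>{1..5}. (\<Sum>j\<in>J. if a \<in> E j then d' j else 0) = 0"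
  proof
    fix a assume a: "a\<in>{1..5::nat}"
    have "(\<Sum>j\<in>J. if a \<in> E j then d' j else 0) = (\<Sum>j\<in>S. if a\<in>E j then d j else 0)"
      by (rule sum.mono_neutral_cong_right) (use fin assms(1) in \<open>auto simp: d'_def\<close>)
    then show "(\<Sum>j\<in>J. if a \<in> E j then d' j else 0) = 0" using assms(2) a by simp
  qed
  from ind[OF this] have "d' j = 0" using assms by blast
  then show False using assms by (simp add: d'_def)
qed

lemma inj: assumes "j\<in>J" "k\<in>J" "E j = E k" shows "j = k"
proof (rule ccontr)
  assume ne: "j \<noteq> k"
  show False
  proof (rule nodep[of "{j,k}" "\<lambda>i. if i = j then 1 else -1" j])
    show "\<forall>a\<in>{1..5}. (\<Sum>i\<in>{j,k}. if a\<in>E i then (if i = j then 1 else -1) else 0) = (0::rat)"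
      using ne assms(3) by simp
  qed (use assms in auto)
qed

lemma injJ': "j\<in>J' \<Longrightarrow> k\<in>J' \<Longrightarrow> E j = E k \<Longrightarrow> j = k"
  using inj J'sub by blast

lemma A: assumes "a\<in>{1..5}" shows "(\<Sum>j\<in>J'. if a \<in> E j then c j else 0) \<in> \<int>"
proof -
  have e: "(\<Sum>j\<in>J. if a \<in> E j then c j else 0) = (\<Sum>j\<in>J-J'. if a \<in> E j then c j else 0) + (\<Sum>j\<in>J'. if a \<in> E j then c j else 0)"
    using sum.subset_diff[OF J'sub fin] by blast
  have i: "(\<Sum>j\<in>J-J'. if a \<in> E j then c j else 0) \<in> \<int>"
    by (rule Ints_sum) (auto simp: J'_def)
  have "(\<Sum>j\<in>J'. if a \<in> E j then c j else 0) = (\<Sum>j\<in>J. if a \<in> E j then c j else 0) - (\<Sum>j\<in>J-J'. if a \<in> E j then c j else 0)"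
    using e by simp
  then show ?thesis using Ints_diff[OF yint[OF assms] i] by simp
qed

lemma B: "(\<Sum>j\<in>J'. c j) \<in> \<int>"
proof -
  have e: "(\<Sum>j\<in>J. c j) = (\<Sum>j\<in>J-J'. c j) + (\<Sum>j\<in>J'. c j)"
    using sum.subset_diff[OF J'sub fin] by blast
  have i: "(\<Sum>j\<in>J-J'. c j) \<in> \<int>"
    by (rule Ints_sum) (auto simp: J'_def)
  have "(\<Sum>j\<in>J'. c j) = (\<Sum>j\<in>J. c j) - (\<Sum>j\<in>J-J'. c j)"
    using e by simp
  then show ?thesis using Ints_diff[OF sint i] by simp
qed

lemma leaf:
  assumes "a\<in>{1..5}" "j0\<in>J'" "a\<in>E j0" "\<forall>j\<in>J'. a\<in>E j \<longrightarrow> E j = E j0"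
  shows False
proof -
  have "(\<Sum>j\<in>J'. if a \<in> E j then c j else 0) = (\<Sum>j\<in>{j0}. if a \<in> E j then c j else 0)"
  proof (rule sum.mono_neutral_right[OF finJ'])
    show "{j0} \<subseteq> J'" using assms by auto
    show "\<forall>i\<in>J' - {j0}. (if a \<in> E i then c i else 0) = 0"
    proof
      fix i assume i: "i \<in> J' - {j0}"
      have "a \<notin> E i"
      proof
        assume "a \<in> E i"
        then have "E i = E j0" using assms(4) i by auto
        then have "i = j0" using inj[of i j0] i assms(2) J'sub by auto
        then show False using i by auto
      qed
      then show "(if a \<in> E i then c i else 0) = 0" by simp
    qed
  qed
  then have "c j0 \<in> \<int>" using A[OF assms(1)] assms(3) by simp
  then show False using assms(2) by (simp add: J'_def)
qed

lemma all_edges: assumes "j\<in>J'"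
  shows "(E j = {1,2} \<and> P 1 2) \<or> (E j = {1,3} \<and> P 1 3) \<or> (E j = {1,4} \<and> P 1 4) \<or> (E j = {1,5} \<and> P 1 5)
   \<or> (E j = {2,3} \<and> P 2 3) \<or> (E j = {2,4} \<and> P 2 4) \<or> (E j = {2,5} \<and> P 2 5)
   \<or> (E j = {3,4} \<and> P 3 4) \<or> (E j = {3,5} \<and> P 3 5) \<or> (E j = {4,5} \<and> P 4 5)"
proof -
  have "E j \<in> Edges10" using edge assms J'sub by auto
  then have "E j = {1,2} \<or> E j = {1,3} \<or> E j = {1,4} \<or> E j = {1,5} \<or> E j = {2,3} \<or> E j = {2,4} \<or> E j = {2,5} \<or> E j = {3,4} \<or> E j = {3,5} \<or> E j = {4,5}"
    unfolding Edges10_def by simp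
  moreover have "\<And>u w. E j = {u,w} \<Longrightarrow> P u w" using assms unfolding P_def by blast
  ultimately show ?thesis by (elim disjE) simp_all
qed

lemma getj: assumes "P u w" obtains j where "j\<in>J'" "E j = {u,w}"
  using assms unfolding P_def by blast

lemma jne: "E j = A \<Longrightarrow> E k = B \<Longrightarrow> x \<in> A \<Longrightarrow> x \<notin> B \<Longrightarrow> j \<noteq> k"
  by auto

lemma tri:
  assumes "x \<in> {1..5}" "x\<noteq>y" "y\<noteq>z" "x\<noteq>z" "P x y" "P y z" "P x z"
    "\<forall>j\<in>J'. E j = {x,y} \<or> E j = {y,z} \<or> E j = {x,z}"
  shows False
proof -
  obtain j1 where j1: "j1\<in>J'" "E j1 = {x,y}" using getj assms(5) by blast
  obtain j2 where j2: "j2\<in>J'" "E j2 = {y,z}" using getj assms(6) by blast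
  obtain j3 where j3: "j3\<in>J'" "E j3 = {x,z}" using getj assms(7) by blast
  have d12: "j1 \<noteq> j2" using jne[OF j1(2) j2(2), of x] assms(2-4) by simp
  have d13: "j1 \<noteq> j3" using jne[OF j1(2) j3(2), of y] assms(2-4) by simp
  have d23: "j2 \<noteq> j3" using jne[OF j2(2) j3(2), of y] assms(2-4) by simp
  note d = d12 d13 d23
  have "J' = {j1,j2,j3}"
  proof
    show "J' \<subseteq> {j1,j2,j3}"
    proof
      fix j assume j: "j\<in>J'"
      have "E j = {x,y} \<or> E j = {y,z} \<or> E j = {x,z}"
        using assms(8) j by blast
      then show "j \<in> {j1,j2,j3}"
      proof (elim disjE)
        assume "E j = {x,y}" then show ?thesis using injJ'[OF j j1(1)] j1(2) by simp
      next
        assume "E j = {y,z}" then show ?thesis using injJ'[OF j j2(1)] j2(2) by simp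
      next
        assume "E j = {x,z}" then show ?thesis using injJ'[OF j j3(1)] j3(2) by simp
      qed
    qed
  qed (use j1 j2 j3 in auto)
  then have h: "c j1 + c j3 \<in> \<int>" "c j1 + c j2 + c j3 \<in> \<int>"
    using A[OF assms(1)] B d j1 j2 j3 assms(2-4) by (simp_all add: add.assoc)
  have "(c j1 + c j2 + c j3) - (c j1 + c j3) \<in> \<int>" by (rule Ints_diff[OF h(2) h(1)])
  then have "c j2 \<in> \<int>" by simp
  then show False using j2 by (simp add: J'_def)
qed

lemma cyc5:
  assumes "x1\<noteq>x2" "x1\<noteq>x3" "x1\<noteq>x4" "x1\<noteq>x5" "x2\<noteq>x3" "x2\<noteq>x4" "x2\<noteq>x5" "x3\<noteq>x4" "x3\<noteq>x5" "x4\<noteq>x5"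
    "x3 \<in> {1..5}" "x5 \<in> {1..5}"
    "P x1 x2" "P x2 x3" "P x3 x4" "P x4 x5" "P x5 x1"
    "\<forall>j\<in>J'. E j = {x1,x2} \<or> E j = {x2,x3} \<or> E j = {x3,x4} \<or> E j = {x4,x5} \<or> E j = {x5,x1}"
  shows False
proof -
  obtain j1 where j1: "j1\<in>J'" "E j1 = {x1,x2}" using getj assms by blast
  obtain j2 where j2: "j2\<in>J'" "E j2 = {x2,x3}" using getj assms by blast
  obtain j3 where j3: "j3\<in>J'" "E j3 = {x3,x4}" using getj assms by blast
  obtain j4 where j4: "j4\<in>J'" "E j4 = {x4,x5}" using getj assms by blast
  obtain j5 where j5: "j5\<in>J'" "E j5 = {x5,x1}" using getj assms by blast
  have d12: "j1 \<noteq> j2" using jne[OF j1(2) j2(2), of x1] assms(1-10) by simp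
  have d13: "j1 \<noteq> j3" using jne[OF j1(2) j3(2), of x1] assms(1-10) by simp
  have d14: "j1 \<noteq> j4" using jne[OF j1(2) j4(2), of x1] assms(1-10) by simp
  have d15: "j1 \<noteq> j5" using jne[OF j1(2) j5(2), of x2] assms(1-10) by simp
  have d23: "j2 \<noteq> j3" using jne[OF j2(2) j3(2), of x2] assms(1-10) by simp
  have d24: "j2 \<noteq> j4" using jne[OF j2(2) j4(2), of x2] assms(1-10) by simp
  have d25: "j2 \<noteq> j5" using jne[OF j2(2) j5(2), of x2] assms(1-10) by simp
  have d34: "j3 \<noteq> j4" using jne[OF j3(2) j4(2), of x3] assms(1-10) by simp
  have d35: "j3 \<noteq> j5" using jne[OF j3(2) j5(2), of x3] assms(1-10) by simp
  have d45: "j4 \<noteq> j5" using jne[OF j4(2) j5(2), of x4] assms(1-10) by simp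
  note d = d12 d13 d14 d15 d23 d24 d25 d34 d35 d45
  have "J' = {j1,j2,j3,j4,j5}"
  proof
    show "J' \<subseteq> {j1,j2,j3,j4,j5}"
    proof
      fix j assume j: "j\<in>J'"
      have "E j = {x1,x2} \<or> E j = {x2,x3} \<or> E j = {x3,x4} \<or> E j = {x4,x5} \<or> E j = {x5,x1}"
        using assms(18) j by blast
      then show "j \<in> {j1,j2,j3,j4,j5}"
      proof (elim disjE)
        assume "E j = {x1,x2}" then show ?thesis using injJ'[OF j j1(1)] j1(2) by simp
      next
        assume "E j = {x2,x3}" then show ?thesis using injJ'[OF j j2(1)] j2(2) by simp
      next
        assume "E j = {x3,x4}" then show ?thesis using injJ'[OF j j3(1)] j3(2) by simp
      next
        assume "E j = {x4,x5}" then show ?thesis using injJ'[OF j j4(1)] j4(2) by simp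
      next
        assume "E j = {x5,x1}" then show ?thesis using injJ'[OF j j5(1)] j5(2) by simp
      qed
    qed
  qed (use j1 j2 j3 j4 j5 in auto)
  then have h: "c j2 + c j3 \<in> \<int>" "c j4 + c j5 \<in> \<int>" "c j1 + (c j2 + (c j3 + (c j4 + c j5))) \<in> \<int>"
    using A[OF assms(11)] A[OF assms(12)] B d j1 j2 j3 j4 j5 assms(1-10) by simp_all
  have "(c j1 + (c j2 + (c j3 + (c j4 + c j5)))) - (c j2 + c j3) - (c j4 + c j5) \<in> \<int>"
    by (rule Ints_diff[OF Ints_diff[OF h(3) h(1)] h(2)])
  then have "c j1 \<in> \<int>" by simp
  then show False using j1 by (simp add: J'_def)
qed

lemma c4:
  assumes "x1\<noteq>x2" "x1\<noteq>x3" "x1\<noteq>x4" "x2\<noteq>x3" "x2\<noteq>x4" "x3\<noteq>x4"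
    "P x1 x2" "P x2 x3" "P x3 x4" "P x4 x1"
  shows False
proof -
  obtain j1 where j1: "j1\<in>J'" "E j1 = {x1,x2}" using getj assms by blast
  obtain j2 where j2: "j2\<in>J'" "E j2 = {x2,x3}" using getj assms by blast
  obtain j3 where j3: "j3\<in>J'" "E j3 = {x3,x4}" using getj assms by blast
  obtain j4 where j4: "j4\<in>J'" "E j4 = {x4,x1}" using getj assms by blast
  have d12: "j1 \<noteq> j2" using jne[OF j1(2) j2(2), of x1] assms(1-6) by simp
  have d13: "j1 \<noteq> j3" using jne[OF j1(2) j3(2), of x1] assms(1-6) by simp
  have d14: "j1 \<noteq> j4" using jne[OF j1(2) j4(2), of x2] assms(1-6) by simp
  have d23: "j2 \<noteq> j3" using jne[OF j2(2) j3(2), of x2] assms(1-6) by simp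
  have d24: "j2 \<noteq> j4" using jne[OF j2(2) j4(2), of x2] assms(1-6) by simp
  have d34: "j3 \<noteq> j4" using jne[OF j3(2) j4(2), of x3] assms(1-6) by simp
  note d = d12 d13 d14 d23 d24 d34
  show False
  proof (rule nodep[of "{j1,j2,j3,j4}" "\<lambda>i. if i = j1 \<or> i = j3 then 1 else -1" j1])
    show "\<forall>a\<in>{1..5}. (\<Sum>i\<in>{j1,j2,j3,j4}. if a\<in>E i then (if i = j1 \<or> i = j3 then 1 else -1) else 0) = (0::rat)"
    proof
      fix a :: nat
      have "(\<Sum>i\<in>{j1,j2,j3,j4}. if a\<in>E i then (if i = j1 \<or> i = j3 then 1 else -1) else 0) =
         (if a\<in>{x1,x2} then 1 else 0) + ((if a\<in>{x2,x3} then -1 else 0) + ((if a\<in>{x3,x4} then 1 else 0) + (if a\<in>{x4,x1} then -1 else (0::rat))))"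
        using d j1 j2 j3 j4 by (simp split del: if_split cong: if_cong)
      also have "\<dots> = 0"
        using assms(1-6) by (cases "a = x1"; cases "a = x2"; cases "a = x3"; cases "a = x4"; simp)
      finally show "(\<Sum>i\<in>{j1,j2,j3,j4}. if a\<in>E i then (if i = j1 \<or> i = j3 then 1 else -1) else 0) = (0::rat)" .
    qed
  qed (use j1 j2 j3 j4 J'sub in auto)
qed


lemma bowtie:
  assumes "x1\<noteq>x2" "x1\<noteq>x3" "x1\<noteq>x4" "x1\<noteq>x5" "x2\<noteq>x3" "x2\<noteq>x4" "x2\<noteq>x5" "x3\<noteq>x4" "x3\<noteq>x5" "x4\<noteq>x5"
    "P x1 x2" "P x2 x3" "P x3 x1" "P x3 x4" "P x4 x5" "P x5 x3"
  shows False
proof -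
  obtain j1 where j1: "j1\<in>J'" "E j1 = {x1,x2}" using getj assms by blast
  obtain j2 where j2: "j2\<in>J'" "E j2 = {x2,x3}" using getj assms by blast
  obtain j3 where j3: "j3\<in>J'" "E j3 = {x3,x1}" using getj assms by blast
  obtain j4 where j4: "j4\<in>J'" "E j4 = {x3,x4}" using getj assms by blast
  obtain j5 where j5: "j5\<in>J'" "E j5 = {x4,x5}" using getj assms by blast
  obtain j6 where j6: "j6\<in>J'" "E j6 = {x5,x3}" using getj assms by blast
  have d12: "j1 \<noteq> j2" using jne[OF j1(2) j2(2), of x1] assms(1-10) by simp
  have d13: "j1 \<noteq> j3" using jne[OF j1(2) j3(2), of x2] assms(1-10) by simp
  have d14: "j1 \<noteq> j4" using jne[OF j1(2) j4(2), of x1] assms(1-10) by simp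
  have d15: "j1 \<noteq> j5" using jne[OF j1(2) j5(2), of x1] assms(1-10) by simp
  have d16: "j1 \<noteq> j6" using jne[OF j1(2) j6(2), of x1] assms(1-10) by simp
  have d23: "j2 \<noteq> j3" using jne[OF j2(2) j3(2), of x2] assms(1-10) by simp
  have d24: "j2 \<noteq> j4" using jne[OF j2(2) j4(2), of x2] assms(1-10) by simp
  have d25: "j2 \<noteq> j5" using jne[OF j2(2) j5(2), of x2] assms(1-10) by simp
  have d26: "j2 \<noteq> j6" using jne[OF j2(2) j6(2), of x2] assms(1-10) by simp
  have d34: "j3 \<noteq> j4" using jne[OF j3(2) j4(2), of x1] assms(1-10) by simp
  have d35: "j3 \<noteq> j5" using jne[OF j3(2) j5(2), of x3] assms(1-10) by simp
  have d36: "j3 \<noteq> j6" using jne[OF j3(2) j6(2), of x1] assms(1-10) by simp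
  have d45: "j4 \<noteq> j5" using jne[OF j4(2) j5(2), of x3] assms(1-10) by simp
  have d46: "j4 \<noteq> j6" using jne[OF j4(2) j6(2), of x4] assms(1-10) by simp
  have d56: "j5 \<noteq> j6" using jne[OF j5(2) j6(2), of x4] assms(1-10) by simp
  note d = d12 d13 d14 d15 d16 d23 d24 d25 d26 d34 d35 d36 d45 d46 d56
  show False
  proof (rule nodep[of "{j1,j2,j3,j4,j5,j6}" "\<lambda>i. if i = j1 \<or> i = j4 \<or> i = j6 then 1 else -1" j1])
    show "\<forall>a\<in>{1..5}. (\<Sum>i\<in>{j1,j2,j3,j4,j5,j6}. if a\<in>E i then (if i = j1 \<or> i = j4 \<or> i = j6 then 1 else -1) else 0) = (0::rat)"
    proof
      fix a :: nat
      define f where "f = (\<lambda>i. if a\<in>E i then (if i = j1 \<or> i = j4 \<or> i = j6 then 1 else -1) else (0::rat))"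
      have s: "(\<Sum>i\<in>{j1,j2,j3,j4,j5,j6}. if a\<in>E i then (if i = j1 \<or> i = j4 \<or> i = j6 then 1 else -1) else 0) =
         f j1 + (f j2 + (f j3 + (f j4 + (f j5 + f j6))))"
        unfolding f_def[symmetric] using d by simp
      have fs: "f j1 = (if a\<in>{x1,x2} then 1 else 0)" "f j2 = (if a\<in>{x2,x3} then -1 else 0)"
        "f j3 = (if a\<in>{x3,x1} then -1 else 0)" "f j4 = (if a\<in>{x3,x4} then 1 else 0)"
        "f j5 = (if a\<in>{x4,x5} then -1 else 0)" "f j6 = (if a\<in>{x5,x3} then 1 else 0)"
        using d j1 j2 j3 j4 j5 j6 by (simp_all add: f_def)
      have "(\<Sum>i\<in>{j1,j2,j3,j4,j5,j6}. if a\<in>E i then (if i = j1 \<or> i = j4 \<or> i = j6 then 1 else -1) else 0) =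
         (if a\<in>{x1,x2} then 1 else 0) + ((if a\<in>{x2,x3} then -1 else 0) + ((if a\<in>{x3,x1} then -1 else 0) +
         ((if a\<in>{x3,x4} then 1 else 0) + ((if a\<in>{x4,x5} then -1 else 0) + (if a\<in>{x5,x3} then 1 else (0::rat))))))"
        by (simp only: s fs)
      also have "\<dots> = 0"
        using assms(1-10) by (cases "a = x1"; cases "a = x2"; cases "a = x3"; cases "a = x4"; cases "a = x5"; simp)
      finally show "(\<Sum>i\<in>{j1,j2,j3,j4,j5,j6}. if a\<in>E i then (if i = j1 \<or> i = j4 \<or> i = j6 then 1 else -1) else 0) = (0::rat)" .
    qed
  qed (use j1 j2 j3 j4 j5 j6 J'sub in auto)
qed


lemma five: "y \<in> {1..5::nat} \<Longrightarrow> y = 1 \<or> y = 2 \<or> y = 3 \<or> y = 4 \<or> y = 5"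
  by auto

lemma leafgen: assumes "a \<in> {1..5}" "x \<in> {1..5}" "a \<noteq> x" "P a x"
   "\<And>y. y \<in> {1..5} \<Longrightarrow> y \<noteq> a \<Longrightarrow> y \<noteq> x \<Longrightarrow> \<not> P a y"
  shows False
proof -
  obtain j0 where j0: "j0\<in>J'" "E j0 = {a,x}" using getj assms(4) by blast
  show False
  proof (rule leaf[OF assms(1) j0(1)])
    show "a \<in> E j0" using j0 by simp
    show "\<forall>j\<in>J'. a \<in> E j \<longrightarrow> E j = E j0"
    proof (intro ballI impI)
      fix j assume j: "j \<in> J'" "a \<in> E j"
      have "E j \<in> Edges10" using edge j(1) J'sub by auto
      then obtain u w where uw: "E j = {u,w}" "u \<in> {1..5}" "w \<in> {1..5}" "u \<noteq> w"
        unfolding Edges10_def by auto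
      obtain y where y: "E j = {a,y}" "y \<in> {1..5}" "y \<noteq> a"
        using uw j(2) by (auto simp: insert_commute)
      have "P a y" using y j(1) unfolding P_def by blast
      then have "y = x" using assms(5)[OF y(2) y(3)] by blast
      then show "E j = E j0" using y j0 by simp
    qed
  qed
qed

lemma J'_empty: "J' = {}"
proof (rule ccontr)
  assume "J' \<noteq> {}"
  then obtain j where "j \<in> J'" by blast
  from all_edges[OF this] have ne: "P 1 2 \<or> P 1 3 \<or> P 1 4 \<or> P 1 5 \<or> P 2 3 \<or> P 2 4 \<or> P 2 5 \<or> P 3 4 \<or> P 3 5 \<or> P 4 5" by blast
  have lf1: "\<not> (P 1 2 \<and> \<not> P 1 3 \<and> \<not> P 1 4 \<and> \<not> P 1 5)"
  proof
    assume h: "P 1 2 \<and> \<not> P 1 3 \<and> \<not> P 1 4 \<and> \<not> P 1 5"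
    show False
    proof (rule leafgen[of 1 2])
      fix y :: nat assume y: "y \<in> {1..5}" "y \<noteq> 1" "y \<noteq> 2"
      show "\<not> P 1 y" using five[OF y(1)] y(2,3) h by auto
    qed (use h in simp_all)
  qed
  have lf2: "\<not> (P 1 3 \<and> \<not> P 1 2 \<and> \<not> P 1 4 \<and> \<not> P 1 5)"
  proof
    assume h: "P 1 3 \<and> \<not> P 1 2 \<and> \<not> P 1 4 \<and> \<not> P 1 5"
    show False
    proof (rule leafgen[of 1 3])
      fix y :: nat assume y: "y \<in> {1..5}" "y \<noteq> 1" "y \<noteq> 3"
      show "\<not> P 1 y" using five[OF y(1)] y(2,3) h by auto
    qed (use h in simp_all)
  qed
  have lf3: "\<not> (P 1 4 \<and> \<not> P 1 2 \<and> \<not> P 1 3 \<and> \<not> P 1 5)"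
  proof
    assume h: "P 1 4 \<and> \<not> P 1 2 \<and> \<not> P 1 3 \<and> \<not> P 1 5"
    show False
    proof (rule leafgen[of 1 4])
      fix y :: nat assume y: "y \<in> {1..5}" "y \<noteq> 1" "y \<noteq> 4"
      show "\<not> P 1 y" using five[OF y(1)] y(2,3) h by auto
    qed (use h in simp_all)
  qed
  have lf4: "\<not> (P 1 5 \<and> \<not> P 1 2 \<and> \<not> P 1 3 \<and> \<not> P 1 4)"
  proof
    assume h: "P 1 5 \<and> \<not> P 1 2 \<and> \<not> P 1 3 \<and> \<not> P 1 4"
    show False
    proof (rule leafgen[of 1 5])
      fix y :: nat assume y: "y \<in> {1..5}" "y \<noteq> 1" "y \<noteq> 5"
      show "\<not> P 1 y" using five[OF y(1)] y(2,3) h by auto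
    qed (use h in simp_all)
  qed
  have lf5: "\<not> (P 2 1 \<and> \<not> P 2 3 \<and> \<not> P 2 4 \<and> \<not> P 2 5)"
  proof
    assume h: "P 2 1 \<and> \<not> P 2 3 \<and> \<not> P 2 4 \<and> \<not> P 2 5"
    show False
    proof (rule leafgen[of 2 1])
      fix y :: nat assume y: "y \<in> {1..5}" "y \<noteq> 2" "y \<noteq> 1"
      show "\<not> P 2 y" using five[OF y(1)] y(2,3) h by auto
    qed (use h in simp_all)
  qed
  have lf6: "\<not> (P 2 3 \<and> \<not> P 2 1 \<and> \<not> P 2 4 \<and> \<not> P 2 5)"
  proof
    assume h: "P 2 3 \<and> \<not> P 2 1 \<and> \<not> P 2 4 \<and> \<not> P 2 5"
    show False
    proof (rule leafgen[of 2 3])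
      fix y :: nat assume y: "y \<in> {1..5}" "y \<noteq> 2" "y \<noteq> 3"
      show "\<not> P 2 y" using five[OF y(1)] y(2,3) h by auto
    qed (use h in simp_all)
  qed
  have lf7: "\<not> (P 2 4 \<and> \<not> P 2 1 \<and> \<not> P 2 3 \<and> \<not> P 2 5)"
  proof
    assume h: "P 2 4 \<and> \<not> P 2 1 \<and> \<not> P 2 3 \<and> \<not> P 2 5"
    show False
    proof (rule leafgen[of 2 4])
      fix y :: nat assume y: "y \<in> {1..5}" "y \<noteq> 2" "y \<noteq> 4"
      show "\<not> P 2 y" using five[OF y(1)] y(2,3) h by auto
    qed (use h in simp_all)
  qed
  have lf8: "\<not> (P 2 5 \<and> \<not> P 2 1 \<and> \<not> P 2 3 \<and> \<not> P 2 4)"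
  proof
    assume h: "P 2 5 \<and> \<not> P 2 1 \<and> \<not> P 2 3 \<and> \<not> P 2 4"
    show False
    proof (rule leafgen[of 2 5])
      fix y :: nat assume y: "y \<in> {1..5}" "y \<noteq> 2" "y \<noteq> 5"
      show "\<not> P 2 y" using five[OF y(1)] y(2,3) h by auto
    qed (use h in simp_all)
  qed
  have lf9: "\<not> (P 3 1 \<and> \<not> P 3 2 \<and> \<not> P 3 4 \<and> \<not> P 3 5)"
  proof
    assume h: "P 3 1 \<and> \<not> P 3 2 \<and> \<not> P 3 4 \<and> \<not> P 3 5"
    show False
    proof (rule leafgen[of 3 1])
      fix y :: nat assume y: "y \<in> {1..5}" "y \<noteq> 3" "y \<noteq> 1"
      show "\<not> P 3 y" using five[OF y(1)] y(2,3) h by auto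
    qed (use h in simp_all)
  qed
  have lf10: "\<not> (P 3 2 \<and> \<not> P 3 1 \<and> \<not> P 3 4 \<and> \<not> P 3 5)"
  proof
    assume h: "P 3 2 \<and> \<not> P 3 1 \<and> \<not> P 3 4 \<and> \<not> P 3 5"
    show False
    proof (rule leafgen[of 3 2])
      fix y :: nat assume y: "y \<in> {1..5}" "y \<noteq> 3" "y \<noteq> 2"
      show "\<not> P 3 y" using five[OF y(1)] y(2,3) h by auto
    qed (use h in simp_all)
  qed
  have lf11: "\<not> (P 3 4 \<and> \<not> P 3 1 \<and> \<not> P 3 2 \<and> \<not> P 3 5)"
  proof
    assume h: "P 3 4 \<and> \<not> P 3 1 \<and> \<not> P 3 2 \<and> \<not> P 3 5"
    show False
    proof (rule leafgen[of 3 4])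
      fix y :: nat assume y: "y \<in> {1..5}" "y \<noteq> 3" "y \<noteq> 4"
      show "\<not> P 3 y" using five[OF y(1)] y(2,3) h by auto
    qed (use h in simp_all)
  qed
  have lf12: "\<not> (P 3 5 \<and> \<not> P 3 1 \<and> \<not> P 3 2 \<and> \<not> P 3 4)"
  proof
    assume h: "P 3 5 \<and> \<not> P 3 1 \<and> \<not> P 3 2 \<and> \<not> P 3 4"
    show False
    proof (rule leafgen[of 3 5])
      fix y :: nat assume y: "y \<in> {1..5}" "y \<noteq> 3" "y \<noteq> 5"
      show "\<not> P 3 y" using five[OF y(1)] y(2,3) h by auto
    qed (use h in simp_all)
  qed
  have lf13: "\<not> (P 4 1 \<and> \<not> P 4 2 \<and> \<not> P 4 3 \<and> \<not> P 4 5)"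
  proof
    assume h: "P 4 1 \<and> \<not> P 4 2 \<and> \<not> P 4 3 \<and> \<not> P 4 5"
    show False
    proof (rule leafgen[of 4 1])
      fix y :: nat assume y: "y \<in> {1..5}" "y \<noteq> 4" "y \<noteq> 1"
      show "\<not> P 4 y" using five[OF y(1)] y(2,3) h by auto
    qed (use h in simp_all)
  qed
  have lf14: "\<not> (P 4 2 \<and> \<not> P 4 1 \<and> \<not> P 4 3 \<and> \<not> P 4 5)"
  proof
    assume h: "P 4 2 \<and> \<not> P 4 1 \<and> \<not> P 4 3 \<and> \<not> P 4 5"
    show False
    proof (rule leafgen[of 4 2])
      fix y :: nat assume y: "y \<in> {1..5}" "y \<noteq> 4" "y \<noteq> 2"
      show "\<not> P 4 y" using five[OF y(1)] y(2,3) h by auto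
    qed (use h in simp_all)
  qed
  have lf15: "\<not> (P 4 3 \<and> \<not> P 4 1 \<and> \<not> P 4 2 \<and> \<not> P 4 5)"
  proof
    assume h: "P 4 3 \<and> \<not> P 4 1 \<and> \<not> P 4 2 \<and> \<not> P 4 5"
    show False
    proof (rule leafgen[of 4 3])
      fix y :: nat assume y: "y \<in> {1..5}" "y \<noteq> 4" "y \<noteq> 3"
      show "\<not> P 4 y" using five[OF y(1)] y(2,3) h by auto
    qed (use h in simp_all)
  qed
  have lf16: "\<not> (P 4 5 \<and> \<not> P 4 1 \<and> \<not> P 4 2 \<and> \<not> P 4 3)"
  proof
    assume h: "P 4 5 \<and> \<not> P 4 1 \<and> \<not> P 4 2 \<and> \<not> P 4 3"
    show False
    proof (rule leafgen[of 4 5])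
      fix y :: nat assume y: "y \<in> {1..5}" "y \<noteq> 4" "y \<noteq> 5"
      show "\<not> P 4 y" using five[OF y(1)] y(2,3) h by auto
    qed (use h in simp_all)
  qed
  have lf17: "\<not> (P 5 1 \<and> \<not> P 5 2 \<and> \<not> P 5 3 \<and> \<not> P 5 4)"
  proof
    assume h: "P 5 1 \<and> \<not> P 5 2 \<and> \<not> P 5 3 \<and> \<not> P 5 4"
    show False
    proof (rule leafgen[of 5 1])
      fix y :: nat assume y: "y \<in> {1..5}" "y \<noteq> 5" "y \<noteq> 1"
      show "\<not> P 5 y" using five[OF y(1)] y(2,3) h by auto
    qed (use h in simp_all)
  qed
  have lf18: "\<not> (P 5 2 \<and> \<not> P 5 1 \<and> \<not> P 5 3 \<and> \<not> P 5 4)"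
  proof
    assume h: "P 5 2 \<and> \<not> P 5 1 \<and> \<not> P 5 3 \<and> \<not> P 5 4"
    show False
    proof (rule leafgen[of 5 2])
      fix y :: nat assume y: "y \<in> {1..5}" "y \<noteq> 5" "y \<noteq> 2"
      show "\<not> P 5 y" using five[OF y(1)] y(2,3) h by auto
    qed (use h in simp_all)
  qed
  have lf19: "\<not> (P 5 3 \<and> \<not> P 5 1 \<and> \<not> P 5 2 \<and> \<not> P 5 4)"
  proof
    assume h: "P 5 3 \<and> \<not> P 5 1 \<and> \<not> P 5 2 \<and> \<not> P 5 4"
    show False
    proof (rule leafgen[of 5 3])
      fix y :: nat assume y: "y \<in> {1..5}" "y \<noteq> 5" "y \<noteq> 3"
      show "\<not> P 5 y" using five[OF y(1)] y(2,3) h by auto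
    qed (use h in simp_all)
  qed
  have lf20: "\<not> (P 5 4 \<and> \<not> P 5 1 \<and> \<not> P 5 2 \<and> \<not> P 5 3)"
  proof
    assume h: "P 5 4 \<and> \<not> P 5 1 \<and> \<not> P 5 2 \<and> \<not> P 5 3"
    show False
    proof (rule leafgen[of 5 4])
      fix y :: nat assume y: "y \<in> {1..5}" "y \<noteq> 5" "y \<noteq> 4"
      show "\<not> P 5 y" using five[OF y(1)] y(2,3) h by auto
    qed (use h in simp_all)
  qed
  have cf21: "\<not> (P 1 2 \<and> P 2 3 \<and> P 3 4 \<and> P 4 1)"
    by (rule notI, elim conjE, rule c4[of 1 2 3 4]) simp_all
  have cf22: "\<not> (P 1 2 \<and> P 2 3 \<and> P 3 5 \<and> P 5 1)"
    by (rule notI, elim conjE, rule c4[of 1 2 3 5]) simp_all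
  have cf23: "\<not> (P 1 2 \<and> P 2 4 \<and> P 4 3 \<and> P 3 1)"
    by (rule notI, elim conjE, rule c4[of 1 2 4 3]) simp_all
  have cf24: "\<not> (P 1 2 \<and> P 2 4 \<and> P 4 5 \<and> P 5 1)"
    by (rule notI, elim conjE, rule c4[of 1 2 4 5]) simp_all
  have cf25: "\<not> (P 1 2 \<and> P 2 5 \<and> P 5 3 \<and> P 3 1)"
    by (rule notI, elim conjE, rule c4[of 1 2 5 3]) simp_all
  have cf26: "\<not> (P 1 2 \<and> P 2 5 \<and> P 5 4 \<and> P 4 1)"
    by (rule notI, elim conjE, rule c4[of 1 2 5 4]) simp_all
  have cf27: "\<not> (P 1 3 \<and> P 3 2 \<and> P 2 4 \<and> P 4 1)"
    by (rule notI, elim conjE, rule c4[of 1 3 2 4]) simp_all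
  have cf28: "\<not> (P 1 3 \<and> P 3 2 \<and> P 2 5 \<and> P 5 1)"
    by (rule notI, elim conjE, rule c4[of 1 3 2 5]) simp_all
  have cf29: "\<not> (P 1 3 \<and> P 3 4 \<and> P 4 5 \<and> P 5 1)"
    by (rule notI, elim conjE, rule c4[of 1 3 4 5]) simp_all
  have cf30: "\<not> (P 1 3 \<and> P 3 5 \<and> P 5 4 \<and> P 4 1)"
    by (rule notI, elim conjE, rule c4[of 1 3 5 4]) simp_all
  have cf31: "\<not> (P 1 4 \<and> P 4 2 \<and> P 2 5 \<and> P 5 1)"
    by (rule notI, elim conjE, rule c4[of 1 4 2 5]) simp_all
  have cf32: "\<not> (P 1 4 \<and> P 4 3 \<and> P 3 5 \<and> P 5 1)"
    by (rule notI, elim conjE, rule c4[of 1 4 3 5]) simp_all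
  have cf33: "\<not> (P 2 3 \<and> P 3 4 \<and> P 4 5 \<and> P 5 2)"
    by (rule notI, elim conjE, rule c4[of 2 3 4 5]) simp_all
  have cf34: "\<not> (P 2 3 \<and> P 3 5 \<and> P 5 4 \<and> P 4 2)"
    by (rule notI, elim conjE, rule c4[of 2 3 5 4]) simp_all
  have cf35: "\<not> (P 2 4 \<and> P 4 3 \<and> P 3 5 \<and> P 5 2)"
    by (rule notI, elim conjE, rule c4[of 2 4 3 5]) simp_all
  have bf36: "\<not> (P 1 2 \<and> P 2 3 \<and> P 3 1 \<and> P 3 4 \<and> P 4 5 \<and> P 5 3)"
    by (rule notI, elim conjE, rule bowtie[of 1 2 3 4 5]) simp_all
  have bf37: "\<not> (P 1 2 \<and> P 2 4 \<and> P 4 1 \<and> P 4 3 \<and> P 3 5 \<and> P 5 4)"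
    by (rule notI, elim conjE, rule bowtie[of 1 2 4 3 5]) simp_all
  have bf38: "\<not> (P 1 2 \<and> P 2 5 \<and> P 5 1 \<and> P 5 3 \<and> P 3 4 \<and> P 4 5)"
    by (rule notI, elim conjE, rule bowtie[of 1 2 5 3 4]) simp_all
  have bf39: "\<not> (P 1 3 \<and> P 3 2 \<and> P 2 1 \<and> P 2 4 \<and> P 4 5 \<and> P 5 2)"
    by (rule notI, elim conjE, rule bowtie[of 1 3 2 4 5]) simp_all
  have bf40: "\<not> (P 1 3 \<and> P 3 4 \<and> P 4 1 \<and> P 4 2 \<and> P 2 5 \<and> P 5 4)"
    by (rule notI, elim conjE, rule bowtie[of 1 3 4 2 5]) simp_all
  have bf41: "\<not> (P 1 3 \<and> P 3 5 \<and> P 5 1 \<and> P 5 2 \<and> P 2 4 \<and> P 4 5)"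
    by (rule notI, elim conjE, rule bowtie[of 1 3 5 2 4]) simp_all
  have bf42: "\<not> (P 1 4 \<and> P 4 2 \<and> P 2 1 \<and> P 2 3 \<and> P 3 5 \<and> P 5 2)"
    by (rule notI, elim conjE, rule bowtie[of 1 4 2 3 5]) simp_all
  have bf43: "\<not> (P 1 4 \<and> P 4 3 \<and> P 3 1 \<and> P 3 2 \<and> P 2 5 \<and> P 5 3)"
    by (rule notI, elim conjE, rule bowtie[of 1 4 3 2 5]) simp_all
  have bf44: "\<not> (P 1 4 \<and> P 4 5 \<and> P 5 1 \<and> P 5 2 \<and> P 2 3 \<and> P 3 5)"
    by (rule notI, elim conjE, rule bowtie[of 1 4 5 2 3]) simp_all
  have bf45: "\<not> (P 1 5 \<and> P 5 2 \<and> P 2 1 \<and> P 2 3 \<and> P 3 4 \<and> P 4 2)"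
    by (rule notI, elim conjE, rule bowtie[of 1 5 2 3 4]) simp_all
  have bf46: "\<not> (P 1 5 \<and> P 5 3 \<and> P 3 1 \<and> P 3 2 \<and> P 2 4 \<and> P 4 3)"
    by (rule notI, elim conjE, rule bowtie[of 1 5 3 2 4]) simp_all
  have bf47: "\<not> (P 1 5 \<and> P 5 4 \<and> P 4 1 \<and> P 4 2 \<and> P 2 3 \<and> P 3 4)"
    by (rule notI, elim conjE, rule bowtie[of 1 5 4 2 3]) simp_all
  have bf48: "\<not> (P 2 3 \<and> P 3 1 \<and> P 1 2 \<and> P 1 4 \<and> P 4 5 \<and> P 5 1)"
    by (rule notI, elim conjE, rule bowtie[of 2 3 1 4 5]) simp_all
  have bf49: "\<not> (P 2 4 \<and> P 4 1 \<and> P 1 2 \<and> P 1 3 \<and> P 3 5 \<and> P 5 1)"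
    by (rule notI, elim conjE, rule bowtie[of 2 4 1 3 5]) simp_all
  have bf50: "\<not> (P 2 5 \<and> P 5 1 \<and> P 1 2 \<and> P 1 3 \<and> P 3 4 \<and> P 4 1)"
    by (rule notI, elim conjE, rule bowtie[of 2 5 1 3 4]) simp_all
  have tf51: "\<not> (P 1 2 \<and> P 2 3 \<and> P 1 3 \<and> \<not> P 1 4 \<and> \<not> P 1 5 \<and> \<not> P 2 4 \<and> \<not> P 2 5 \<and> \<not> P 3 4 \<and> \<not> P 3 5 \<and> \<not> P 4 5)"
  proof
    assume h: "P 1 2 \<and> P 2 3 \<and> P 1 3 \<and> \<not> P 1 4 \<and> \<not> P 1 5 \<and> \<not> P 2 4 \<and> \<not> P 2 5 \<and> \<not> P 3 4 \<and> \<not> P 3 5 \<and> \<not> P 4 5"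
    show False
    proof (rule tri[of 1 2 3])
      show "\<forall>j\<in>J'. E j = {1,2} \<or> E j = {2,3} \<or> E j = {1,3}"
      proof
        fix j assume j: "j \<in> J'"
        show "E j = {1,2} \<or> E j = {2,3} \<or> E j = {1,3}" using all_edges[OF j] h by blast
      qed
    qed (use h in simp_all)
  qed
  have tf52: "\<not> (P 1 2 \<and> P 2 4 \<and> P 1 4 \<and> \<not> P 1 3 \<and> \<not> P 1 5 \<and> \<not> P 2 3 \<and> \<not> P 2 5 \<and> \<not> P 3 4 \<and> \<not> P 3 5 \<and> \<not> P 4 5)"
  proof
    assume h: "P 1 2 \<and> P 2 4 \<and> P 1 4 \<and> \<not> P 1 3 \<and> \<not> P 1 5 \<and> \<not> P 2 3 \<and> \<not> P 2 5 \<and> \<not> P 3 4 \<and> \<not> P 3 5 \<and> \<not> P 4 5"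
    show False
    proof (rule tri[of 1 2 4])
      show "\<forall>j\<in>J'. E j = {1,2} \<or> E j = {2,4} \<or> E j = {1,4}"
      proof
        fix j assume j: "j \<in> J'"
        show "E j = {1,2} \<or> E j = {2,4} \<or> E j = {1,4}" using all_edges[OF j] h by blast
      qed
    qed (use h in simp_all)
  qed
  have tf53: "\<not> (P 1 2 \<and> P 2 5 \<and> P 1 5 \<and> \<not> P 1 3 \<and> \<not> P 1 4 \<and> \<not> P 2 3 \<and> \<not> P 2 4 \<and> \<not> P 3 4 \<and> \<not> P 3 5 \<and> \<not> P 4 5)"
  proof
    assume h: "P 1 2 \<and> P 2 5 \<and> P 1 5 \<and> \<not> P 1 3 \<and> \<not> P 1 4 \<and> \<not> P 2 3 \<and> \<not> P 2 4 \<and> \<not> P 3 4 \<and> \<not> P 3 5 \<and> \<not> P 4 5"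
    show False
    proof (rule tri[of 1 2 5])
      show "\<forall>j\<in>J'. E j = {1,2} \<or> E j = {2,5} \<or> E j = {1,5}"
      proof
        fix j assume j: "j \<in> J'"
        show "E j = {1,2} \<or> E j = {2,5} \<or> E j = {1,5}" using all_edges[OF j] h by blast
      qed
    qed (use h in simp_all)
  qed
  have tf54: "\<not> (P 1 3 \<and> P 3 4 \<and> P 1 4 \<and> \<not> P 1 2 \<and> \<not> P 1 5 \<and> \<not> P 2 3 \<and> \<not> P 2 4 \<and> \<not> P 2 5 \<and> \<not> P 3 5 \<and> \<not> P 4 5)"
  proof
    assume h: "P 1 3 \<and> P 3 4 \<and> P 1 4 \<and> \<not> P 1 2 \<and> \<not> P 1 5 \<and> \<not> P 2 3 \<and> \<not> P 2 4 \<and> \<not> P 2 5 \<and> \<not> P 3 5 \<and> \<not> P 4 5"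
    show False
    proof (rule tri[of 1 3 4])
      show "\<forall>j\<in>J'. E j = {1,3} \<or> E j = {3,4} \<or> E j = {1,4}"
      proof
        fix j assume j: "j \<in> J'"
        show "E j = {1,3} \<or> E j = {3,4} \<or> E j = {1,4}" using all_edges[OF j] h by blast
      qed
    qed (use h in simp_all)
  qed
  have tf55: "\<not> (P 1 3 \<and> P 3 5 \<and> P 1 5 \<and> \<not> P 1 2 \<and> \<not> P 1 4 \<and> \<not> P 2 3 \<and> \<not> P 2 4 \<and> \<not> P 2 5 \<and> \<not> P 3 4 \<and> \<not> P 4 5)"
  proof
    assume h: "P 1 3 \<and> P 3 5 \<and> P 1 5 \<and> \<not> P 1 2 \<and> \<not> P 1 4 \<and> \<not> P 2 3 \<and> \<not> P 2 4 \<and> \<not> P 2 5 \<and> \<not> P 3 4 \<and> \<not> P 4 5"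
    show False
    proof (rule tri[of 1 3 5])
      show "\<forall>j\<in>J'. E j = {1,3} \<or> E j = {3,5} \<or> E j = {1,5}"
      proof
        fix j assume j: "j \<in> J'"
        show "E j = {1,3} \<or> E j = {3,5} \<or> E j = {1,5}" using all_edges[OF j] h by blast
      qed
    qed (use h in simp_all)
  qed
  have tf56: "\<not> (P 1 4 \<and> P 4 5 \<and> P 1 5 \<and> \<not> P 1 2 \<and> \<not> P 1 3 \<and> \<not> P 2 3 \<and> \<not> P 2 4 \<and> \<not> P 2 5 \<and> \<not> P 3 4 \<and> \<not> P 3 5)"
  proof
    assume h: "P 1 4 \<and> P 4 5 \<and> P 1 5 \<and> \<not> P 1 2 \<and> \<not> P 1 3 \<and> \<not> P 2 3 \<and> \<not> P 2 4 \<and> \<not> P 2 5 \<and> \<not> P 3 4 \<and> \<not> P 3 5"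
    show False
    proof (rule tri[of 1 4 5])
      show "\<forall>j\<in>J'. E j = {1,4} \<or> E j = {4,5} \<or> E j = {1,5}"
      proof
        fix j assume j: "j \<in> J'"
        show "E j = {1,4} \<or> E j = {4,5} \<or> E j = {1,5}" using all_edges[OF j] h by blast
      qed
    qed (use h in simp_all)
  qed
  have tf57: "\<not> (P 2 3 \<and> P 3 4 \<and> P 2 4 \<and> \<not> P 1 2 \<and> \<not> P 1 3 \<and> \<not> P 1 4 \<and> \<not> P 1 5 \<and> \<not> P 2 5 \<and> \<not> P 3 5 \<and> \<not> P 4 5)"
  proof
    assume h: "P 2 3 \<and> P 3 4 \<and> P 2 4 \<and> \<not> P 1 2 \<and> \<not> P 1 3 \<and> \<not> P 1 4 \<and> \<not> P 1 5 \<and> \<not> P 2 5 \<and> \<not> P 3 5 \<and> \<not> P 4 5"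
    show False
    proof (rule tri[of 2 3 4])
      show "\<forall>j\<in>J'. E j = {2,3} \<or> E j = {3,4} \<or> E j = {2,4}"
      proof
        fix j assume j: "j \<in> J'"
        show "E j = {2,3} \<or> E j = {3,4} \<or> E j = {2,4}" using all_edges[OF j] h by blast
      qed
    qed (use h in simp_all)
  qed
  have tf58: "\<not> (P 2 3 \<and> P 3 5 \<and> P 2 5 \<and> \<not> P 1 2 \<and> \<not> P 1 3 \<and> \<not> P 1 4 \<and> \<not> P 1 5 \<and> \<not> P 2 4 \<and> \<not> P 3 4 \<and> \<not> P 4 5)"
  proof
    assume h: "P 2 3 \<and> P 3 5 \<and> P 2 5 \<and> \<not> P 1 2 \<and> \<not> P 1 3 \<and> \<not> P 1 4 \<and> \<not> P 1 5 \<and> \<not> P 2 4 \<and> \<not> P 3 4 \<and> \<not> P 4 5"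
    show False
    proof (rule tri[of 2 3 5])
      show "\<forall>j\<in>J'. E j = {2,3} \<or> E j = {3,5} \<or> E j = {2,5}"
      proof
        fix j assume j: "j \<in> J'"
        show "E j = {2,3} \<or> E j = {3,5} \<or> E j = {2,5}" using all_edges[OF j] h by blast
      qed
    qed (use h in simp_all)
  qed
  have tf59: "\<not> (P 2 4 \<and> P 4 5 \<and> P 2 5 \<and> \<not> P 1 2 \<and> \<not> P 1 3 \<and> \<not> P 1 4 \<and> \<not> P 1 5 \<and> \<not> P 2 3 \<and> \<not> P 3 4 \<and> \<not> P 3 5)"
  proof
    assume h: "P 2 4 \<and> P 4 5 \<and> P 2 5 \<and> \<not> P 1 2 \<and> \<not> P 1 3 \<and> \<not> P 1 4 \<and> \<not> P 1 5 \<and> \<not> P 2 3 \<and> \<not> P 3 4 \<and> \<not> P 3 5"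
    show False
    proof (rule tri[of 2 4 5])
      show "\<forall>j\<in>J'. E j = {2,4} \<or> E j = {4,5} \<or> E j = {2,5}"
      proof
        fix j assume j: "j \<in> J'"
        show "E j = {2,4} \<or> E j = {4,5} \<or> E j = {2,5}" using all_edges[OF j] h by blast
      qed
    qed (use h in simp_all)
  qed
  have tf60: "\<not> (P 3 4 \<and> P 4 5 \<and> P 3 5 \<and> \<not> P 1 2 \<and> \<not> P 1 3 \<and> \<not> P 1 4 \<and> \<not> P 1 5 \<and> \<not> P 2 3 \<and> \<not> P 2 4 \<and> \<not> P 2 5)"
  proof
    assume h: "P 3 4 \<and> P 4 5 \<and> P 3 5 \<and> \<not> P 1 2 \<and> \<not> P 1 3 \<and> \<not> P 1 4 \<and> \<not> P 1 5 \<and> \<not> P 2 3 \<and> \<not> P 2 4 \<and> \<not> P 2 5"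
    show False
    proof (rule tri[of 3 4 5])
      show "\<forall>j\<in>J'. E j = {3,4} \<or> E j = {4,5} \<or> E j = {3,5}"
      proof
        fix j assume j: "j \<in> J'"
        show "E j = {3,4} \<or> E j = {4,5} \<or> E j = {3,5}" using all_edges[OF j] h by blast
      qed
    qed (use h in simp_all)
  qed
  have pf61: "\<not> (P 1 2 \<and> P 2 3 \<and> P 3 4 \<and> P 4 5 \<and> P 1 5 \<and> \<not> P 1 3 \<and> \<not> P 1 4 \<and> \<not> P 2 4 \<and> \<not> P 2 5 \<and> \<not> P 3 5)"
  proof
    assume h: "P 1 2 \<and> P 2 3 \<and> P 3 4 \<and> P 4 5 \<and> P 1 5 \<and> \<not> P 1 3 \<and> \<not> P 1 4 \<and> \<not> P 2 4 \<and> \<not> P 2 5 \<and> \<not> P 3 5"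
    have s: "P 1 2" "P 2 3" "P 3 4" "P 4 5" "P 5 1" using h P_sym by blast+
    show False
    proof (rule cyc5[of 1 2 3 4 5])
      show "\<forall>j\<in>J'. E j = {1,2} \<or> E j = {2,3} \<or> E j = {3,4} \<or> E j = {4,5} \<or> E j = {5,1}"
      proof
        fix j assume j: "j \<in> J'"
        have "E j = {1,2} \<or> E j = {2,3} \<or> E j = {3,4} \<or> E j = {4,5} \<or> E j = {1,5}" using all_edges[OF j] h by blast
        then show "E j = {1,2} \<or> E j = {2,3} \<or> E j = {3,4} \<or> E j = {4,5} \<or> E j = {5,1}" by (simp add: insert_commute)
      qed
    qed (use s in simp_all)
  qed
  have pf62: "\<not> (P 1 2 \<and> P 2 3 \<and> P 3 5 \<and> P 4 5 \<and> P 1 4 \<and> \<not> P 1 3 \<and> \<not> P 1 5 \<and> \<not> P 2 4 \<and> \<not> P 2 5 \<and> \<not> P 3 4)"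
  proof
    assume h: "P 1 2 \<and> P 2 3 \<and> P 3 5 \<and> P 4 5 \<and> P 1 4 \<and> \<not> P 1 3 \<and> \<not> P 1 5 \<and> \<not> P 2 4 \<and> \<not> P 2 5 \<and> \<not> P 3 4"
    have s: "P 1 2" "P 2 3" "P 3 5" "P 5 4" "P 4 1" using h P_sym by blast+
    show False
    proof (rule cyc5[of 1 2 3 5 4])
      show "\<forall>j\<in>J'. E j = {1,2} \<or> E j = {2,3} \<or> E j = {3,5} \<or> E j = {5,4} \<or> E j = {4,1}"
      proof
        fix j assume j: "j \<in> J'"
        have "E j = {1,2} \<or> E j = {2,3} \<or> E j = {3,5} \<or> E j = {4,5} \<or> E j = {1,4}" using all_edges[OF j] h by blast
        then show "E j = {1,2} \<or> E j = {2,3} \<or> E j = {3,5} \<or> E j = {5,4} \<or> E j = {4,1}" by (simp add: insert_commute)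
      qed
    qed (use s in simp_all)
  qed
  have pf63: "\<not> (P 1 2 \<and> P 2 4 \<and> P 3 4 \<and> P 3 5 \<and> P 1 5 \<and> \<not> P 1 3 \<and> \<not> P 1 4 \<and> \<not> P 2 3 \<and> \<not> P 2 5 \<and> \<not> P 4 5)"
  proof
    assume h: "P 1 2 \<and> P 2 4 \<and> P 3 4 \<and> P 3 5 \<and> P 1 5 \<and> \<not> P 1 3 \<and> \<not> P 1 4 \<and> \<not> P 2 3 \<and> \<not> P 2 5 \<and> \<not> P 4 5"
    have s: "P 1 2" "P 2 4" "P 4 3" "P 3 5" "P 5 1" using h P_sym by blast+
    show False
    proof (rule cyc5[of 1 2 4 3 5])
      show "\<forall>j\<in>J'. E j = {1,2} \<or> E j = {2,4} \<or> E j = {4,3} \<or> E j = {3,5} \<or> E j = {5,1}"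
      proof
        fix j assume j: "j \<in> J'"
        have "E j = {1,2} \<or> E j = {2,4} \<or> E j = {3,4} \<or> E j = {3,5} \<or> E j = {1,5}" using all_edges[OF j] h by blast
        then show "E j = {1,2} \<or> E j = {2,4} \<or> E j = {4,3} \<or> E j = {3,5} \<or> E j = {5,1}" by (simp add: insert_commute)
      qed
    qed (use s in simp_all)
  qed
  have pf64: "\<not> (P 1 2 \<and> P 2 4 \<and> P 4 5 \<and> P 3 5 \<and> P 1 3 \<and> \<not> P 1 4 \<and> \<not> P 1 5 \<and> \<not> P 2 3 \<and> \<not> P 2 5 \<and> \<not> P 3 4)"
  proof
    assume h: "P 1 2 \<and> P 2 4 \<and> P 4 5 \<and> P 3 5 \<and> P 1 3 \<and> \<not> P 1 4 \<and> \<not> P 1 5 \<and> \<not> P 2 3 \<and> \<not> P 2 5 \<and> \<not> P 3 4"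
    have s: "P 1 2" "P 2 4" "P 4 5" "P 5 3" "P 3 1" using h P_sym by blast+
    show False
    proof (rule cyc5[of 1 2 4 5 3])
      show "\<forall>j\<in>J'. E j = {1,2} \<or> E j = {2,4} \<or> E j = {4,5} \<or> E j = {5,3} \<or> E j = {3,1}"
      proof
        fix j assume j: "j \<in> J'"
        have "E j = {1,2} \<or> E j = {2,4} \<or> E j = {4,5} \<or> E j = {3,5} \<or> E j = {1,3}" using all_edges[OF j] h by blast
        then show "E j = {1,2} \<or> E j = {2,4} \<or> E j = {4,5} \<or> E j = {5,3} \<or> E j = {3,1}" by (simp add: insert_commute)
      qed
    qed (use s in simp_all)
  qed
  have pf65: "\<not> (P 1 2 \<and> P 2 5 \<and> P 3 5 \<and> P 3 4 \<and> P 1 4 \<and> \<not> P 1 3 \<and> \<not> P 1 5 \<and> \<not> P 2 3 \<and> \<not> P 2 4 \<and> \<not> P 4 5)"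
  proof
    assume h: "P 1 2 \<and> P 2 5 \<and> P 3 5 \<and> P 3 4 \<and> P 1 4 \<and> \<not> P 1 3 \<and> \<not> P 1 5 \<and> \<not> P 2 3 \<and> \<not> P 2 4 \<and> \<not> P 4 5"
    have s: "P 1 2" "P 2 5" "P 5 3" "P 3 4" "P 4 1" using h P_sym by blast+
    show False
    proof (rule cyc5[of 1 2 5 3 4])
      show "\<forall>j\<in>J'. E j = {1,2} \<or> E j = {2,5} \<or> E j = {5,3} \<or> E j = {3,4} \<or> E j = {4,1}"
      proof
        fix j assume j: "j \<in> J'"
        have "E j = {1,2} \<or> E j = {2,5} \<or> E j = {3,5} \<or> E j = {3,4} \<or> E j = {1,4}" using all_edges[OF j] h by blast
        then show "E j = {1,2} \<or> E j = {2,5} \<or> E j = {5,3} \<or> E j = {3,4} \<or> E j = {4,1}" by (simp add: insert_commute)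
      qed
    qed (use s in simp_all)
  qed
  have pf66: "\<not> (P 1 2 \<and> P 2 5 \<and> P 4 5 \<and> P 3 4 \<and> P 1 3 \<and> \<not> P 1 4 \<and> \<not> P 1 5 \<and> \<not> P 2 3 \<and> \<not> P 2 4 \<and> \<not> P 3 5)"
  proof
    assume h: "P 1 2 \<and> P 2 5 \<and> P 4 5 \<and> P 3 4 \<and> P 1 3 \<and> \<not> P 1 4 \<and> \<not> P 1 5 \<and> \<not> P 2 3 \<and> \<not> P 2 4 \<and> \<not> P 3 5"
    have s: "P 1 2" "P 2 5" "P 5 4" "P 4 3" "P 3 1" using h P_sym by blast+
    show False
    proof (rule cyc5[of 1 2 5 4 3])
      show "\<forall>j\<in>J'. E j = {1,2} \<or> E j = {2,5} \<or> E j = {5,4} \<or> E j = {4,3} \<or> E j = {3,1}"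
      proof
        fix j assume j: "j \<in> J'"
        have "E j = {1,2} \<or> E j = {2,5} \<or> E j = {4,5} \<or> E j = {3,4} \<or> E j = {1,3}" using all_edges[OF j] h by blast
        then show "E j = {1,2} \<or> E j = {2,5} \<or> E j = {5,4} \<or> E j = {4,3} \<or> E j = {3,1}" by (simp add: insert_commute)
      qed
    qed (use s in simp_all)
  qed
  have pf67: "\<not> (P 1 3 \<and> P 2 3 \<and> P 2 4 \<and> P 4 5 \<and> P 1 5 \<and> \<not> P 1 2 \<and> \<not> P 1 4 \<and> \<not> P 2 5 \<and> \<not> P 3 4 \<and> \<not> P 3 5)"
  proof
    assume h: "P 1 3 \<and> P 2 3 \<and> P 2 4 \<and> P 4 5 \<and> P 1 5 \<and> \<not> P 1 2 \<and> \<not> P 1 4 \<and> \<not> P 2 5 \<and> \<not> P 3 4 \<and> \<not> P 3 5"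
    have s: "P 1 3" "P 3 2" "P 2 4" "P 4 5" "P 5 1" using h P_sym by blast+
    show False
    proof (rule cyc5[of 1 3 2 4 5])
      show "\<forall>j\<in>J'. E j = {1,3} \<or> E j = {3,2} \<or> E j = {2,4} \<or> E j = {4,5} \<or> E j = {5,1}"
      proof
        fix j assume j: "j \<in> J'"
        have "E j = {1,3} \<or> E j = {2,3} \<or> E j = {2,4} \<or> E j = {4,5} \<or> E j = {1,5}" using all_edges[OF j] h by blast
        then show "E j = {1,3} \<or> E j = {3,2} \<or> E j = {2,4} \<or> E j = {4,5} \<or> E j = {5,1}" by (simp add: insert_commute)
      qed
    qed (use s in simp_all)
  qed
  have pf68: "\<not> (P 1 3 \<and> P 2 3 \<and> P 2 5 \<and> P 4 5 \<and> P 1 4 \<and> \<not> P 1 2 \<and> \<not> P 1 5 \<and> \<not> P 2 4 \<and> \<not> P 3 4 \<and> \<not> P 3 5)"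
  proof
    assume h: "P 1 3 \<and> P 2 3 \<and> P 2 5 \<and> P 4 5 \<and> P 1 4 \<and> \<not> P 1 2 \<and> \<not> P 1 5 \<and> \<not> P 2 4 \<and> \<not> P 3 4 \<and> \<not> P 3 5"
    have s: "P 1 3" "P 3 2" "P 2 5" "P 5 4" "P 4 1" using h P_sym by blast+
    show False
    proof (rule cyc5[of 1 3 2 5 4])
      show "\<forall>j\<in>J'. E j = {1,3} \<or> E j = {3,2} \<or> E j = {2,5} \<or> E j = {5,4} \<or> E j = {4,1}"
      proof
        fix j assume j: "j \<in> J'"
        have "E j = {1,3} \<or> E j = {2,3} \<or> E j = {2,5} \<or> E j = {4,5} \<or> E j = {1,4}" using all_edges[OF j] h by blast
        then show "E j = {1,3} \<or> E j = {3,2} \<or> E j = {2,5} \<or> E j = {5,4} \<or> E j = {4,1}" by (simp add: insert_commute)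
      qed
    qed (use s in simp_all)
  qed
  have pf69: "\<not> (P 1 3 \<and> P 3 4 \<and> P 2 4 \<and> P 2 5 \<and> P 1 5 \<and> \<not> P 1 2 \<and> \<not> P 1 4 \<and> \<not> P 2 3 \<and> \<not> P 3 5 \<and> \<not> P 4 5)"
  proof
    assume h: "P 1 3 \<and> P 3 4 \<and> P 2 4 \<and> P 2 5 \<and> P 1 5 \<and> \<not> P 1 2 \<and> \<not> P 1 4 \<and> \<not> P 2 3 \<and> \<not> P 3 5 \<and> \<not> P 4 5"
    have s: "P 1 3" "P 3 4" "P 4 2" "P 2 5" "P 5 1" using h P_sym by blast+
    show False
    proof (rule cyc5[of 1 3 4 2 5])
      show "\<forall>j\<in>J'. E j = {1,3} \<or> E j = {3,4} \<or> E j = {4,2} \<or> E j = {2,5} \<or> E j = {5,1}"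
      proof
        fix j assume j: "j \<in> J'"
        have "E j = {1,3} \<or> E j = {3,4} \<or> E j = {2,4} \<or> E j = {2,5} \<or> E j = {1,5}" using all_edges[OF j] h by blast
        then show "E j = {1,3} \<or> E j = {3,4} \<or> E j = {4,2} \<or> E j = {2,5} \<or> E j = {5,1}" by (simp add: insert_commute)
      qed
    qed (use s in simp_all)
  qed
  have pf70: "\<not> (P 1 3 \<and> P 3 5 \<and> P 2 5 \<and> P 2 4 \<and> P 1 4 \<and> \<not> P 1 2 \<and> \<not> P 1 5 \<and> \<not> P 2 3 \<and> \<not> P 3 4 \<and> \<not> P 4 5)"
  proof
    assume h: "P 1 3 \<and> P 3 5 \<and> P 2 5 \<and> P 2 4 \<and> P 1 4 \<and> \<not> P 1 2 \<and> \<not> P 1 5 \<and> \<not> P 2 3 \<and> \<not> P 3 4 \<and> \<not> P 4 5"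
    have s: "P 1 3" "P 3 5" "P 5 2" "P 2 4" "P 4 1" using h P_sym by blast+
    show False
    proof (rule cyc5[of 1 3 5 2 4])
      show "\<forall>j\<in>J'. E j = {1,3} \<or> E j = {3,5} \<or> E j = {5,2} \<or> E j = {2,4} \<or> E j = {4,1}"
      proof
        fix j assume j: "j \<in> J'"
        have "E j = {1,3} \<or> E j = {3,5} \<or> E j = {2,5} \<or> E j = {2,4} \<or> E j = {1,4}" using all_edges[OF j] h by blast
        then show "E j = {1,3} \<or> E j = {3,5} \<or> E j = {5,2} \<or> E j = {2,4} \<or> E j = {4,1}" by (simp add: insert_commute)
      qed
    qed (use s in simp_all)
  qed
  have pf71: "\<not> (P 1 4 \<and> P 2 4 \<and> P 2 3 \<and> P 3 5 \<and> P 1 5 \<and> \<not> P 1 2 \<and> \<not> P 1 3 \<and> \<not> P 2 5 \<and> \<not> P 3 4 \<and> \<not> P 4 5)"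
  proof
    assume h: "P 1 4 \<and> P 2 4 \<and> P 2 3 \<and> P 3 5 \<and> P 1 5 \<and> \<not> P 1 2 \<and> \<not> P 1 3 \<and> \<not> P 2 5 \<and> \<not> P 3 4 \<and> \<not> P 4 5"
    have s: "P 1 4" "P 4 2" "P 2 3" "P 3 5" "P 5 1" using h P_sym by blast+
    show False
    proof (rule cyc5[of 1 4 2 3 5])
      show "\<forall>j\<in>J'. E j = {1,4} \<or> E j = {4,2} \<or> E j = {2,3} \<or> E j = {3,5} \<or> E j = {5,1}"
      proof
        fix j assume j: "j \<in> J'"
        have "E j = {1,4} \<or> E j = {2,4} \<or> E j = {2,3} \<or> E j = {3,5} \<or> E j = {1,5}" using all_edges[OF j] h by blast
        then show "E j = {1,4} \<or> E j = {4,2} \<or> E j = {2,3} \<or> E j = {3,5} \<or> E j = {5,1}" by (simp add: insert_commute)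
      qed
    qed (use s in simp_all)
  qed
  have pf72: "\<not> (P 1 4 \<and> P 3 4 \<and> P 2 3 \<and> P 2 5 \<and> P 1 5 \<and> \<not> P 1 2 \<and> \<not> P 1 3 \<and> \<not> P 2 4 \<and> \<not> P 3 5 \<and> \<not> P 4 5)"
  proof
    assume h: "P 1 4 \<and> P 3 4 \<and> P 2 3 \<and> P 2 5 \<and> P 1 5 \<and> \<not> P 1 2 \<and> \<not> P 1 3 \<and> \<not> P 2 4 \<and> \<not> P 3 5 \<and> \<not> P 4 5"
    have s: "P 1 4" "P 4 3" "P 3 2" "P 2 5" "P 5 1" using h P_sym by blast+
    show False
    proof (rule cyc5[of 1 4 3 2 5])
      show "\<forall>j\<in>J'. E j = {1,4} \<or> E j = {4,3} \<or> E j = {3,2} \<or> E j = {2,5} \<or> E j = {5,1}"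
      proof
        fix j assume j: "j \<in> J'"
        have "E j = {1,4} \<or> E j = {3,4} \<or> E j = {2,3} \<or> E j = {2,5} \<or> E j = {1,5}" using all_edges[OF j] h by blast
        then show "E j = {1,4} \<or> E j = {4,3} \<or> E j = {3,2} \<or> E j = {2,5} \<or> E j = {5,1}" by (simp add: insert_commute)
      qed
    qed (use s in simp_all)
  qed
  show False using ne lf1 lf2 lf3 lf4 lf5 lf6 lf7 lf8 lf9 lf10 lf11 lf12 lf13 lf14 lf15 lf16 lf17 lf18 lf19 lf20 cf21 cf22 cf23 cf24 cf25 cf26 cf27 cf28 cf29 cf30 cf31 cf32 cf33 cf34 cf35 bf36 bf37 bf38 bf39 bf40 bf41 bf42 bf43 bf44 bf45 bf46 bf47 bf48 bf49 bf50 tf51 tf52 tf53 tf54 tf55 tf56 tf57 tf58 tf59 tf60 pf61 pf62 pf63 pf64 pf65 pf66 pf67 pf68 pf69 pf70 pf71 pf72 P_sym[of 1 2] P_sym[of 1 3] P_sym[of 1 4] P_sym[of 1 5] P_sym[of 2 3] P_sym[of 2 4] P_sym[of 2 5] P_sym[of 3 4] P_sym[of 3 5] P_sym[of 4 5] by sat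
qed

lemma core: "\<forall>j\<in>J. c j \<in> \<int>"
  using J'_empty unfolding J'_def by blast

end



lemma eps_in: "1 \<le> k \<Longrightarrow> k \<le> 6 \<Longrightarrow> eps i k = (if k = i then 1 else 0) - 1/6"
  by (simp add: eps_def)

lemma eps_out: "\<not> (1 \<le> k \<and> k \<le> 6) \<Longrightarrow> eps i k = 0"
  unfolding eps_def by auto

lemma six: "{1..6::nat} = {1,2,3,4,5,6}" by auto

lemma trip_sum: assumes "1 \<le> p" "p < q" "q < r" "r \<le> 6"
  shows "eps p k + eps q k + eps r k = (\<Sum>i\<in>{1..6}. ((if i = p then 1 else 0) + (if i = q then 1 else 0) + (if i = r then 1 else 0)) * eps i k)"
proof -
  have "(\<Sum>i\<in>{1..6}. ((if i = p then 1 else 0) + (if i = q then 1 else 0) + (if i = r then 1 else 0)) * eps i k)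
      = (\<Sum>i\<in>{1..6}. (if i = p then eps i k else 0)) + (\<Sum>i\<in>{1..6}. (if i = q then eps i k else 0)) + (\<Sum>i\<in>{1..6}. (if i = r then eps i k else 0))"
  proof -
    have "\<And>i. ((if i = p then 1 else 0) + (if i = q then 1 else 0) + (if i = r then 1 else 0)) * eps i k
       = (if i = p then eps i k else 0) + (if i = q then eps i k else 0) + (if i = r then eps i k else 0)"
      by (simp add: distrib_right)
    then show ?thesis by (simp add: sum.distrib)
  qed
  also have "\<dots> = eps p k + eps q k + eps r k"
    using assms by (simp add: sum.delta)
  finally show ?thesis by simp
qed

lemma trip_cnt: assumes "1 \<le> p" "p < q" "q < r" "r \<le> 6"
  shows "(\<Sum>i\<in>{1..6::nat}. ((if i = p then 1 else 0) + (if i = q then 1 else 0) + (if i = r then 1 else (0::int)))) = 3"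
  using assms by (simp add: sum.distrib sum.delta)

lemma trip_val: assumes "1 \<le> p" "p < q" "q < r" "r \<le> 6"
  shows "eps p k + eps q k + eps r k = (if 1 \<le> k \<and> k \<le> 6 then (if k = p \<or> k = q \<or> k = r then 1 else 0) - 1/2 else 0)"
  using assms by (auto simp: eps_def)

lemma trip_rowsum: assumes "1 \<le> p" "p < q" "q < r" "r \<le> 6"
  shows "(\<Sum>k\<in>{1..6}. eps p k + eps q k + eps r k) = 0"
  unfolding trip_val[OF assms] six using assms by auto

lemma five_nat: "y \<in> {1..5::nat} \<Longrightarrow> y = 1 \<or> y = 2 \<or> y = 3 \<or> y = 4 \<or> y = 5"
  by auto

lemma edge_pq: "1 \<le> p \<Longrightarrow> p < q \<Longrightarrow> q \<le> 5 \<Longrightarrow> {p,q} \<in> Edges10"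
proof -
  assume h: "1 \<le> p" "p < q" "q \<le> (5::nat)"
  then have "p = 1 \<and> q = 2 \<or> p = 1 \<and> q = 3 \<or> p = 1 \<and> q = 4 \<or> p = 1 \<and> q = 5 \<or> p = 2 \<and> q = 3 \<or>
    p = 2 \<and> q = 4 \<or> p = 2 \<and> q = 5 \<or> p = 3 \<and> q = 4 \<or> p = 3 \<and> q = 5 \<or> p = 4 \<and> q = 5" by arith
  then show ?thesis unfolding Edges10_def by (elim disjE) simp_all
qed

lemma edge_pqr: "1 \<le> p \<Longrightarrow> p < q \<Longrightarrow> q < r \<Longrightarrow> r \<le> 5 \<Longrightarrow> {1..5} - {p,q,r} \<in> Edges10"
proof -
  assume h: "1 \<le> p" "p < q" "q < r" "r \<le> (5::nat)"
  have f: "{1..5::nat} = {1,2,3,4,5}" by auto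
  from h have "p = 1 \<and> q = 2 \<and> r = 3 \<or> p = 1 \<and> q = 2 \<and> r = 4 \<or> p = 1 \<and> q = 2 \<and> r = 5 \<or>
    p = 1 \<and> q = 3 \<and> r = 4 \<or> p = 1 \<and> q = 3 \<and> r = 5 \<or> p = 1 \<and> q = 4 \<and> r = 5 \<or>
    p = 2 \<and> q = 3 \<and> r = 4 \<or> p = 2 \<and> q = 3 \<and> r = 5 \<or> p = 2 \<and> q = 4 \<and> r = 5 \<or> p = 3 \<and> q = 4 \<and> r = 5" by arith
  then show ?thesis
  proof (elim disjE)
    assume "p = 1 \<and> q = 2 \<and> r = 3"
    then have "{1..5} - {p,q,r} = {4,5}" by auto
    then show ?thesis unfolding Edges10_def by simp
  next
    assume "p = 1 \<and> q = 2 \<and> r = 4"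
    then have "{1..5} - {p,q,r} = {3,5}" by auto
    then show ?thesis unfolding Edges10_def by simp
  next
    assume "p = 1 \<and> q = 2 \<and> r = 5"
    then have "{1..5} - {p,q,r} = {3,4}" by auto
    then show ?thesis unfolding Edges10_def by simp
  next
    assume "p = 1 \<and> q = 3 \<and> r = 4"
    then have "{1..5} - {p,q,r} = {2,5}" by auto
    then show ?thesis unfolding Edges10_def by simp
  next
    assume "p = 1 \<and> q = 3 \<and> r = 5"
    then have "{1..5} - {p,q,r} = {2,4}" by auto
    then show ?thesis unfolding Edges10_def by simp
  next
    assume "p = 1 \<and> q = 4 \<and> r = 5"
    then have "{1..5} - {p,q,r} = {2,3}" by auto
    then show ?thesis unfolding Edges10_def by simp
  next
    assume "p = 2 \<and> q = 3 \<and> r = 4"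
    then have "{1..5} - {p,q,r} = {1,5}" by auto
    then show ?thesis unfolding Edges10_def by simp
  next
    assume "p = 2 \<and> q = 3 \<and> r = 5"
    then have "{1..5} - {p,q,r} = {1,4}" by auto
    then show ?thesis unfolding Edges10_def by simp
  next
    assume "p = 2 \<and> q = 4 \<and> r = 5"
    then have "{1..5} - {p,q,r} = {1,3}" by auto
    then show ?thesis unfolding Edges10_def by simp
  next
    assume "p = 3 \<and> q = 4 \<and> r = 5"
    then have "{1..5} - {p,q,r} = {1,2}" by auto
    then show ?thesis unfolding Edges10_def by simp
  qed
qed

theorem lemma3:
  fixes v :: "nat \<Rightarrow> nat \<Rightarrow> rat" and m :: nat
  assumes "\<forall>j<m. v j \<in> triples"
    and "lin_indep v m"
  shows "int_span v m = rat_span v m \<inter> Z3"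
proof -
  have "\<forall>j. \<exists>t. j < m \<longrightarrow> (1 \<le> fst t \<and> fst t < fst (snd t) \<and> fst (snd t) < snd (snd t) \<and> snd (snd t) \<le> 6
      \<and> v j = (\<lambda>x. eps (fst t) x + eps (fst (snd t)) x + eps (snd (snd t)) x))"
  proof
    fix j show "\<exists>t. j < m \<longrightarrow> (1 \<le> fst t \<and> fst t < fst (snd t) \<and> fst (snd t) < snd (snd t) \<and> snd (snd t) \<le> 6
      \<and> v j = (\<lambda>x. eps (fst t) x + eps (fst (snd t)) x + eps (snd (snd t)) x))"
    proof (cases "j < m")
      case True then have "v j \<in> triples" using assms(1) by blast
      then obtain i k l where "1 \<le> i \<and> i < k \<and> k < l \<and> l \<le> 6" "v j = (\<lambda>x. eps i x + eps k x + eps l x)"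
        unfolding triples_def by blast
      then show ?thesis by (intro exI[of _ "(i,k,l)"]) simp
    qed simp
  qed
  from choice[OF this] obtain t where t: "\<And>j. j < m \<Longrightarrow> (1 \<le> fst (t j) \<and> fst (t j) < fst (snd (t j)) \<and> fst (snd (t j)) < snd (snd (t j)) \<and> snd (snd (t j)) \<le> 6
      \<and> v j = (\<lambda>x. eps (fst (t j)) x + eps (fst (snd (t j))) x + eps (snd (snd (t j))) x))"
    by blast
  define p where "p j = fst (t j)" for j
  define q where "q j = fst (snd (t j))" for j
  define r where "r j = snd (snd (t j))" for j
  have pqr: "\<And>j. j < m \<Longrightarrow> 1 \<le> p j \<and> p j < q j \<and> q j < r j \<and> r j \<le> 6"
    using t unfolding p_def q_def r_def by blast
  have vj: "\<And>j k. j < m \<Longrightarrow> v j k = eps (p j) k + eps (q j) k + eps (r j) k"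
    using t unfolding p_def q_def r_def by metis
  have vval: "\<And>j k. j < m \<Longrightarrow> v j k = (if 1 \<le> k \<and> k \<le> 6 then (if k = p j \<or> k = q j \<or> k = r j then 1 else 0) - 1/2 else 0)"
    using vj pqr trip_val by metis
  show ?thesis
  proof
    show "int_span v m \<subseteq> rat_span v m \<inter> Z3"
    proof
      fix x assume "x \<in> int_span v m"
      then obtain ci where x: "x = lincomb (\<lambda>j. of_int (ci j)) v m" unfolding int_span_def by blast
      have "x \<in> rat_span v m" unfolding rat_span_def x
        by (rule CollectI, rule exI[of _ "\<lambda>j. of_int (ci j)"], simp)
      moreover have "x \<in> Z3"
      proof -
        define ind where "ind j i = ((if i = p j then 1 else 0) + (if i = q j then 1 else 0) + (if i = r j then 1 else (0::int)))" for j i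
        define a where "a i = (\<Sum>j<m. ci j * ind j i)" for i
        have indr: "of_int (ind j i) = ((if i = p j then 1 else 0) + (if i = q j then 1 else 0) + (if i = r j then 1 else (0::rat)))" for j i
          by (simp add: ind_def)
        have xa1: "x = (\<lambda>k. \<Sum>i\<in>{1..6}. of_int (a i) * eps i k)"
        proof
          fix k
          have "x k = (\<Sum>j<m. of_int (ci j) * (\<Sum>i\<in>{1..6}. of_int (ind j i) * eps i k))"
            unfolding x lincomb_def
          proof (rule sum.cong)
            fix j assume "j \<in> {..<m}"
            then have j: "j < m" by simp
            show "of_int (ci j) * v j k = of_int (ci j) * (\<Sum>i\<in>{1..6}. of_int (ind j i) * eps i k)"
              using vj[OF j] trip_sum[of "p j" "q j" "r j" k] pqr[OF j] by (simp only: indr)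
          qed simp
          also have "\<dots> = (\<Sum>j<m. \<Sum>i\<in>{1..6}. of_int (ci j) * of_int (ind j i) * eps i k)"
            by (simp add: sum_distrib_left mult.assoc)
          also have "\<dots> = (\<Sum>i\<in>{1..6}. \<Sum>j<m. of_int (ci j) * of_int (ind j i) * eps i k)"
            by (rule sum.swap)
          also have "\<dots> = (\<Sum>i\<in>{1..6}. of_int (a i) * eps i k)"
            by (simp add: a_def sum_distrib_right)
          finally show "x k = (\<Sum>i\<in>{1..6}. of_int (a i) * eps i k)" .
        qed
        have am1: "(\<Sum>i\<in>{1..6}. a i) mod 3 = 0"
        proof -
          have "(\<Sum>i\<in>{1..6}. a i) = (\<Sum>j<m. \<Sum>i\<in>{1..6}. ci j * ind j i)"
            unfolding a_def by (rule sum.swap)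
          also have "\<dots> = (\<Sum>j<m. ci j * 3)"
          proof (rule sum.cong)
            fix j assume "j \<in> {..<m}"
            then have j: "j < m" by simp
            have "(\<Sum>i\<in>{1..6}. ind j i) = 3" unfolding ind_def using trip_cnt pqr[OF j] by blast
            moreover have "(\<Sum>i\<in>{1..6}. ci j * ind j i) = ci j * (\<Sum>i\<in>{1..6}. ind j i)"
              by (rule sum_distrib_left[symmetric])
            ultimately show "(\<Sum>i\<in>{1..6}. ci j * ind j i) = ci j * 3" by simp
          qed simp
          also have "\<dots> = 3 * (\<Sum>j<m. ci j)" by (subst sum_distrib_left) (simp add: mult.commute)
          finally show ?thesis by simp
        qed
        have "\<exists>a'. x = (\<lambda>k. \<Sum>i\<in>{1..6}. of_int (a' i) * eps i k) \<and> (\<Sum>i\<in>{1..6}. a' i) mod 3 = 0"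
          by (rule exI[of _ a], rule conjI[OF xa1 am1])
        then show ?thesis by (simp only: Z3_def mem_Collect_eq)
      qed
      ultimately show "x \<in> rat_span v m \<inter> Z3" by blast
    qed
  next
    show "rat_span v m \<inter> Z3 \<subseteq> int_span v m"
    proof
      fix x assume xin: "x \<in> rat_span v m \<inter> Z3"
      then obtain c where xc: "x = lincomb c v m" unfolding rat_span_def by blast
      from xin have "x \<in> Z3" by simp
      then have "\<exists>a. x = (\<lambda>k. \<Sum>i\<in>{1..6}. of_int (a i) * eps i k) \<and> (\<Sum>i\<in>{1..6}. a i) mod 3 = 0"
        by (simp only: Z3_def mem_Collect_eq)
      then obtain a where xa: "x = (\<lambda>k. \<Sum>i\<in>{1..6}. of_int (a i) * eps i k)" and am: "(\<Sum>i\<in>{1..6}. a i) mod 3 = 0"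
        by (elim exE conjE)
      define S where "S = (\<Sum>i\<in>{1..6::nat}. a i)"
      obtain T where T: "S = 3 * T" using am unfolding S_def by (metis dvd_def mod_0_imp_dvd)
      have xk: "x k = of_int (a k) - of_int T / 2" if k: "1 \<le> k" "k \<le> 6" for k
      proof -
        have "x k = (\<Sum>i\<in>{1..6}. (if i = k then of_int (a i) else 0) - of_int (a i) / 6)"
          unfolding xa by (rule sum.cong) (use k in \<open>auto simp: eps_in\<close>)
        also have "\<dots> = of_int (a k) - (\<Sum>i\<in>{1..6}. of_int (a i)) / 6"
          using k by (simp add: sum_subtractf sum_divide_distrib)
        also have "(\<Sum>i\<in>{1..6}. of_int (a i)) = (of_int S :: rat)" unfolding S_def by simp
        finally show ?thesis using T by simp
      qed
      define s where "s j = (if r j = 6 then 1 else - 1 :: rat)" for j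
      define E where "E j = (if r j = 6 then {p j, q j} else {1..5} - {p j, q j, r j})" for j
      have Y: "v j a' + v j 6 = s j * (if a' \<in> E j then 1 else 0)" if j: "j < m" and a': "a' \<in> {1..5}" for j a'
        using pqr[OF j] a' unfolding vval[OF j] s_def E_def by auto
      have V6: "s j = 2 * v j 6" if j: "j < m" for j
        using pqr[OF j] unfolding vval[OF j] s_def by auto
      have sq: "s j * s j = 1" for j unfolding s_def by simp
      have sI: "s j \<in> \<int>" for j unfolding s_def by simp
      have Edg: "E j \<in> Edges10" if j: "j < m" for j
      proof (cases "r j = 6")
        case True then show ?thesis unfolding E_def using pqr[OF j] edge_pq[of "p j" "q j"] by simp
      next
        case False then show ?thesis unfolding E_def using pqr[OF j] edge_pqr[of "p j" "q j" "r j"] by simp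
      qed
      have lin: "lincomb cc v m k = (\<Sum>j<m. cc j * v j k)" for cc k unfolding lincomb_def by simp
      have pair: "lincomb cc v m a' + lincomb cc v m 6 = (\<Sum>j<m. if a' \<in> E j then s j * cc j else 0)"
        if a': "a' \<in> {1..5}" for cc a'
      proof -
        have "lincomb cc v m a' + lincomb cc v m 6 = (\<Sum>j<m. cc j * (v j a' + v j 6))"
          unfolding lin by (simp add: sum.distrib distrib_left)
        also have "\<dots> = (\<Sum>j<m. if a' \<in> E j then s j * cc j else 0)"
          by (rule sum.cong) (use Y a' in auto)
        finally show ?thesis .
      qed
      have "cs {..<m} E (\<lambda>j. s j * c j)"
      proof
        show "finite {..<m}" by simp
        show "\<And>j. j \<in> {..<m} \<Longrightarrow> E j \<in> Edges10" using Edg by simp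
      next
        fix d :: "nat \<Rightarrow> rat"
        assume hd: "\<forall>a\<in>{1..5}. (\<Sum>j\<in>{..<m}. if a \<in> E j then d j else 0) = 0"
        define dd where "dd j = s j * d j" for j
        define z where "z = lincomb dd v m"
        have zA: "z a' + z 6 = 0" if a': "a' \<in> {1..5}" for a'
        proof -
          have "z a' + z 6 = (\<Sum>j<m. if a' \<in> E j then s j * dd j else 0)" unfolding z_def by (rule pair[OF a'])
          also have "\<dots> = (\<Sum>j<m. if a' \<in> E j then d j else 0)"
            by (rule sum.cong) (auto simp: dd_def mult.assoc[symmetric] sq)
          finally show ?thesis using hd a' by simp
        qed
        have zout: "z k = 0" if k: "\<not> (1 \<le> k \<and> k \<le> 6)" for k
          unfolding z_def lin by (rule sum.neutral) (use k vval in auto)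
        have zsum: "(\<Sum>k\<in>{1..6}. z k) = 0"
        proof -
          have "(\<Sum>k\<in>{1..6}. z k) = (\<Sum>j<m. dd j * (\<Sum>k\<in>{1..6}. v j k))"
            unfolding z_def lin sum_distrib_left by (rule sum.swap)
          also have "\<dots> = 0"
          proof (rule sum.neutral, intro ballI)
            fix j assume "j \<in> {..<m}"
            then have j: "j < m" by simp
            have "(\<Sum>k\<in>{1..6}. v j k) = 0" using vj[OF j] trip_rowsum[of "p j" "q j" "r j"] pqr[OF j] by simp
            then show "dd j * (\<Sum>k\<in>{1..6}. v j k) = 0" by simp
          qed
          finally show ?thesis .
        qed
        have z6: "z 6 = 0"
        proof -
          have "(\<Sum>k\<in>{1..6}. z k) = z 1 + z 2 + z 3 + z 4 + z 5 + z 6" unfolding six by (simp add: add.assoc)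
          moreover have "z 1 = - z 6" "z 2 = - z 6" "z 3 = - z 6" "z 4 = - z 6" "z 5 = - z 6"
            using zA[of 1] zA[of 2] zA[of 3] zA[of 4] zA[of 5] by (simp_all add: eq_neg_iff_add_eq_0)
          ultimately show ?thesis using zsum by simp
        qed
        have "z = (\<lambda>x. 0)"
        proof
          fix k show "z k = 0"
          proof (cases "1 \<le> k \<and> k \<le> 6")
            case True
            then show ?thesis
            proof (cases "k = 6")
              case False then have "k \<in> {1..5}" using True by auto
              then show ?thesis using zA z6 by fastforce
            qed (use z6 in simp)
          qed (use zout in simp)
        qed
        then have "\<forall>j<m. dd j = 0" using assms(2) unfolding lin_indep_def z_def by blast
        moreover have "s j \<noteq> 0" for j unfolding s_def by simp
        ultimately show "\<forall>j\<in>{..<m}. d j = 0" unfolding dd_def by auto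
      next
        fix a' :: nat assume a': "a' \<in> {1..5}"
        have "(\<Sum>j\<in>{..<m}. if a' \<in> E j then s j * c j else 0) = x a' + x 6"
          unfolding xc using pair[OF a'] by simp
        also have "\<dots> = of_int (a a' + a 6 - T)" using xk[of a'] xk[of 6] a' by simp
        finally show "(\<Sum>j\<in>{..<m}. if a' \<in> E j then s j * c j else 0) \<in> \<int>" by simp
      next
        have "(\<Sum>j\<in>{..<m}. s j * c j) = 2 * x 6"
          unfolding xc lin sum_distrib_left
          by (rule sum.cong) (auto simp: V6)
        also have "\<dots> = of_int (2 * a 6 - T)" using xk[of 6] by simp
        finally show "(\<Sum>j\<in>{..<m}. s j * c j) \<in> \<int>" by simp
      qed
      from cs.core[OF this] have cI: "\<And>j. j < m \<Longrightarrow> c j \<in> \<int>"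
      proof -
        fix j assume j: "j < m"
        assume "\<forall>j\<in>{..<m}. s j * c j \<in> \<int>"
        then have "s j * (s j * c j) \<in> \<int>" using j sI by auto
        then show "c j \<in> \<int>" by (simp add: mult.assoc[symmetric] sq)
      qed
      have "x = lincomb (\<lambda>j. of_int \<lfloor>c j\<rfloor>) v m"
        unfolding xc lincomb_def
      proof (rule ext, rule sum.cong)
        fix k j assume "j \<in> {..<m}"
        then have "c j \<in> \<int>" using cI by simp
        then have "of_int \<lfloor>c j\<rfloor> = c j" by (metis Ints_cases floor_of_int)
        then show "c j * v j k = of_int \<lfloor>c j\<rfloor> * v j k" by metis
      qed simp
      then show "x \<in> int_span v m" unfolding int_span_def
        by (intro CollectI exI[of _ "\<lambda>j. \<lfloor>c j\<rfloor>"]) simp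
    qed
  qed
qed


end
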